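(* For every integer $n\ge0$, all zeroes of the function $\alpha_n(x)$ are real, distinct and strictly greater than $2$.
   Context: For $x\in\mathbb{R}\setminus\{0\}$ the functions $\alpha_k(x)$, $k\ge0$, are defined as the coefficients of the power series expansion in $z$ $$\frac{\sinh(z)}{\cosh(z)-1+x}=\sum_{k=0}^\infty\alpha_k(x)z^{2k+1}.$$ (For instance $\alpha_0(x)=1/x$; each $\alpha_n(x)$ is of the form $P_n(x)/((2n+1)!\,x^{n+1})$ with $P_n$ a polynomial of degree $n$.) *)

theory Defs
  imports "HOL-Complex_Analysis.Complex_Analysis"
begin

text \<open>The value for x = 0 is irrelevant junk.\<close>
definition alpha :: "nat \<Rightarrow> complex \<Rightarrow> complex" where
  "alpha k x = (deriv ^^ (2 * k + 1)) (\<lambda>z. sinh z / (cosh z - 1 + x)) 0 / fact (2 * k + 1)"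

end

theory Submission
  imports Defs "HOL-Computational_Algebra.Polynomial"
begin

fun PP :: "nat \<Rightarrow> 'a::idom poly" where
  "PP 0 = [:0,1:]"
| "PP (Suc m) = pderiv (PP m) * [:1,0,-1:]"

lemma poly_PP_Suc: "poly (PP (Suc m)) c = poly (pderiv (PP m)) c * (1 - c^2)"
  by (simp add: power2_eq_square algebra_simps)

lemma map_poly_of_real_mult:
  "map_poly (of_real :: real \<Rightarrow> 'a::{real_algebra_1,idom}) (p * q) = map_poly of_real p * map_poly of_real q"
  by (intro poly_eqI) (simp add: coeff_map_poly coeff_mult)

lemma map_poly_of_real_pderiv:
  "map_poly (of_real :: real \<Rightarrow> 'a::{real_algebra_1,idom}) (pderiv p) = pderiv (map_poly of_real p)"
  by (intro poly_eqI) (simp add: coeff_map_poly coeff_pderiv)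

lemma map_PP: "map_poly (of_real :: real \<Rightarrow> 'a::{real_algebra_1,idom}) (PP m) = PP m"
proof (induction m)
  case 0
  then show ?case by (simp add: map_poly_pCons)
next
  case (Suc m)
  have "map_poly (of_real :: real \<Rightarrow> 'a) (PP (Suc m)) = pderiv (map_poly of_real (PP m)) * map_poly of_real [:1,0,-1:]"
    by (simp only: PP.simps map_poly_of_real_mult map_poly_of_real_pderiv)
  also have "map_poly (of_real :: real \<Rightarrow> 'a) [:1,0,-1:] = [:1,0,-1:]"
    by (simp add: map_poly_pCons)
  finally show ?case using Suc by simp
qed

lemma poly_map_of_real: "poly (map_poly (of_real :: real \<Rightarrow> 'a::{real_algebra_1,idom}) p) (of_real t) = of_real (poly p t)"
  by (induction p) (auto simp: map_poly_pCons)

lemma poly_PP_of_real: "poly (PP m) (of_real t :: 'a::{real_algebra_1,idom}) = of_real (poly (PP m) t)"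
proof -
  have "poly (map_poly (of_real :: real \<Rightarrow> 'a) (PP m)) (of_real t) = of_real (poly (PP m) t)"
    by (rule poly_map_of_real)
  then show ?thesis by (simp add: map_PP)
qed

lemma pderiv_PP_of_real: "poly (pderiv (PP m)) (of_real t :: 'a::{real_algebra_1,idom}) = of_real (poly (pderiv (PP m)) t)"
proof -
  have "poly (map_poly (of_real :: real \<Rightarrow> 'a) (pderiv (PP m))) (of_real t) = of_real (poly (pderiv (PP m)) t)"
    by (rule poly_map_of_real)
  then show ?thesis by (simp add: map_PP map_poly_of_real_pderiv)
qed

lemma degree_PP_complex: "degree (PP m :: complex poly) = degree (PP m :: real poly)"
  by (metis map_PP degree_map_poly of_real_eq_0_iff)

lemma PP_even: "pcompose (PP m :: 'a::idom poly) [:0,-1:] = smult ((-1)^(Suc m)) (PP m)"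
proof (induction m)
  case 0
  then show ?case by (simp add: pcompose_pCons)
next
  case (Suc m)
  have d: "pderiv (pcompose (PP m :: 'a poly) [:0,-1:]) = pcompose (pderiv (PP m)) [:0,-1:] * [:-1:]"
    by (simp add: pderiv_pcompose pderiv_pCons)
  have "pcompose (pderiv (PP m :: 'a poly)) [:0,-1:] = - pderiv (pcompose (PP m :: 'a poly) [:0,-1:])"
    using d by (simp add: mult.commute)
  also have "\<dots> = smult ((-1)^(Suc (Suc m))) (pderiv (PP m))"
    using Suc by (simp add: pderiv_smult pderiv_minus)
  finally have e: "pcompose (pderiv (PP m :: 'a poly)) [:0,-1:] = smult ((-1)^(Suc (Suc m))) (pderiv (PP m))" .
  have f: "pcompose [:1,0,-1::'a:] [:0,-1:] = [:1,0,-1:]"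
    by (simp add: pcompose_pCons)
  show ?case by (simp only: PP.simps pcompose_mult e f mult_smult_left)
qed

lemma poly_PP_minus: "poly (PP m :: 'a::idom poly) (-x) = (-1)^(Suc m) * poly (PP m) x"
proof -
  have "poly (pcompose (PP m :: 'a poly) [:0,-1:]) x = poly (PP m) (-x)"
    by (simp add: poly_pcompose)
  then show ?thesis by (simp add: PP_even)
qed

lemma pderiv_PP_odd_0: "odd m \<Longrightarrow> poly (pderiv (PP m :: real poly)) 0 = 0"
proof -
  assume "odd m"
  have "pderiv (pcompose (PP m :: real poly) [:0,-1:]) = pcompose (pderiv (PP m)) [:0,-1:] * [:-1:]"
    by (simp add: pderiv_pcompose pderiv_pCons)
  then have "smult ((-1)^(Suc m)) (pderiv (PP m :: real poly)) = pcompose (pderiv (PP m)) [:0,-1:] * [:-1:]"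
    by (simp add: PP_even pderiv_smult pderiv_minus)
  then have "poly (smult ((-1)^(Suc m)) (pderiv (PP m :: real poly))) 0 = poly (pcompose (pderiv (PP m)) [:0,-1:] * [:-1:]) 0"
    by simp
  then show ?thesis using \<open>odd m\<close> by (simp add: poly_pcompose)
qed

lemma rolle_poly:
  fixes p :: "real poly"
  assumes "a < b" "poly p a = 0" "poly p b = 0"
  shows "\<exists>s. a < s \<and> s < b \<and> poly (pderiv p) s = 0"
proof -
  have "continuous_on {a..b} (poly p)" by (rule continuous_on_poly) (rule continuous_on_id)
  moreover have "\<And>x. poly p differentiable (at x)"
    using poly_DERIV real_differentiable_def by blast
  ultimately obtain z where z: "a < z" "z < b" "DERIV (poly p) z :> 0"
    using Rolle[of a b "poly p"] assms by auto
  have "DERIV (poly p) z :> poly (pderiv p) z" by (rule poly_DERIV)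
  with z(3) have "poly (pderiv p) z = 0" by (rule DERIV_unique[symmetric])
  with z show ?thesis by blast
qed

lemma mono_seq:
  fixes t :: "nat \<Rightarrow> real"
  assumes "\<forall>i<m. t i < t (Suc i)" "i < j" "j \<le> m"
  shows "t i < t j"
  using assms(2,3)
proof (induction j)
  case 0 then show ?case by simp
next
  case (Suc j)
  then show ?case using assms(1) by (cases "i = j") (auto, meson Suc_le_lessD dual_order.strict_trans less_SucE)
qed

lemma rolle_many:
  fixes p :: "real poly" and t :: "nat \<Rightarrow> real"
  assumes "\<forall>i<m. t i < t (Suc i)" "\<forall>i\<le>m. poly p (t i) = 0"
  shows "\<exists>s. \<forall>i<m. t i < s i \<and> s i < t (Suc i) \<and> poly (pderiv p) (s i) = 0"
proof -
  have "\<forall>i. \<exists>s. i < m \<longrightarrow> t i < s \<and> s < t (Suc i) \<and> poly (pderiv p) s = 0"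
    using assms rolle_poly by (metis Suc_leI less_imp_le_nat)
  then show ?thesis by metis
qed

lemma roots_subset:
  fixes p :: "'a::idom poly"
  assumes "p \<noteq> 0" "finite A" "A \<subseteq> {x. poly p x = 0}" "card A \<ge> degree p" "poly p z = 0"
  shows "z \<in> A"
proof (rule ccontr)
  assume "z \<notin> A"
  then have "card (insert z A) = card A + 1" using assms(2) by simp
  moreover have "card (insert z A) \<le> card {x. poly p x = 0}"
    using assms by (intro card_mono poly_roots_finite) auto
  moreover have "card {x. poly p x = 0} \<le> degree p" using assms(1) by (rule card_poly_roots_bound)
  ultimately show False using assms(4) by simp
qed

definition roots_ok :: "real poly \<Rightarrow> nat \<Rightarrow> (nat \<Rightarrow> real) \<Rightarrow> bool" where
  "roots_ok p m t \<longleftrightarrow> t 0 = -1 \<and> t m = 1 \<and> (\<forall>i<m. t i < t (Suc i)) \<and> (\<forall>i\<le>m. poly p (t i) = 0)"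

lemma PP_roots: "m \<ge> 1 \<Longrightarrow> degree (PP m :: real poly) = m + 1 \<and> (\<exists>t. roots_ok (PP m) m t)"
proof (induction m rule: dec_induct)
  case base
  have "PP 1 = ([:1,0,-1:] :: real poly)" by (simp add: numeral_eq_Suc pderiv_pCons)
  moreover have "roots_ok [:1,0,-1:] 1 (\<lambda>i. if i = 0 then -1 else 1)"
    by (simp add: roots_ok_def)
  ultimately show ?case by auto
next
  case (step m)
  then obtain t where t: "roots_ok (PP m) m t" and dg: "degree (PP m :: real poly) = m + 1" by blast
  from t have t1: "\<forall>i<m. t i < t (Suc i)" "\<forall>i\<le>m. poly (PP m) (t i) = 0" "t 0 = -1" "t m = 1"
    by (auto simp: roots_ok_def)
  obtain s where s: "\<forall>i<m. t i < s i \<and> s i < t (Suc i) \<and> poly (pderiv (PP m)) (s i) = 0"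
    using rolle_many[OF t1(1,2)] by blast
  define u where "u i = (if i = 0 then -1 else if i \<le> m then s (i - 1) else 1)" for i
  have pd: "pderiv (PP m :: real poly) \<noteq> 0" using dg by (simp add: pderiv_eq_0_iff)
  have "degree (PP (Suc m) :: real poly) = degree (pderiv (PP m :: real poly)) + 2"
  proof -
    have "degree (pderiv (PP m :: real poly) * [:1,0,-1:]) = degree (pderiv (PP m :: real poly)) + degree [:1::real,0,-1:]"
      using pd by (intro degree_mult_eq) auto
    then show ?thesis by (simp only: PP.simps) simp
  qed
  also have "\<dots> = Suc m + 1" using dg by (simp add: degree_pderiv)
  finally have dg': "degree (PP (Suc m) :: real poly) = Suc m + 1" .
  have ord: "\<forall>i<Suc m. u i < u (Suc i)"
  proof (intro allI impI)
    fix i assume "i < Suc m"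
    show "u i < u (Suc i)"
    proof (cases "i = 0")
      case True
      then show ?thesis using s t1 step.hyps by (auto simp: u_def)
    next
      case False
      then have "i - 1 < m" "Suc (i-1) = i" using \<open>i < Suc m\<close> by auto
      then have a: "s (i-1) < t i" using s by metis
      show ?thesis
      proof (cases "i < m")
        case True
        then show ?thesis using a s False by (auto simp: u_def)
      next
        case False
        then have "i = m" using \<open>i < Suc m\<close> by simp
        then show ?thesis using a t1 \<open>i \<noteq> 0\<close> by (auto simp: u_def)
      qed
    qed
  qed
  have rts: "\<forall>i\<le>Suc m. poly (PP (Suc m)) (u i) = 0"
  proof (intro allI impI)
    fix i assume "i \<le> Suc m"
    show "poly (PP (Suc m)) (u i) = 0"
    proof (cases "i = 0 \<or> i = Suc m")
      case True
      then show ?thesis by (auto simp: u_def poly_PP_Suc)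
    next
      case False
      then have "i - 1 < m" "i \<le> m" using \<open>i \<le> Suc m\<close> by auto
      then show ?thesis using s False by (auto simp: u_def poly_PP_Suc)
    qed
  qed
  have "roots_ok (PP (Suc m)) (Suc m) u"
    unfolding roots_ok_def using ord rts by (simp add: u_def)
  with dg' show ?case by blast
qed

lemma mono_seq_le:
  fixes t :: "nat \<Rightarrow> real"
  assumes "\<forall>i<m. t i < t (Suc i)" "i \<le> j" "j \<le> m"
  shows "t i \<le> t j"
  using mono_seq[OF assms(1)] assms(2,3) by (cases "i = j") (auto intro: less_imp_le)

lemma PP_root_facts:
  assumes m: "m \<ge> 1" and ok: "roots_ok (PP m) m t" and dg: "degree (PP m :: real poly) = m + 1"
  shows "\<forall>z::complex. poly (PP m) z = 0 \<longrightarrow> (\<exists>i\<le>m. z = of_real (t i))"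
    and "\<forall>i\<le>m. poly (pderiv (PP m :: real poly)) (t i) \<noteq> 0"
    and "\<forall>i\<le>m. -1 \<le> t i \<and> t i \<le> 1"
proof -
  from ok have t1: "\<forall>i<m. t i < t (Suc i)" "\<forall>i\<le>m. poly (PP m) (t i) = 0" "t 0 = -1" "t m = 1"
    by (auto simp: roots_ok_def)
  have injt: "inj_on t {..m}"
  proof (rule inj_onI)
    fix i j assume "i \<in> {..m}" "j \<in> {..m}" "t i = t j"
    then show "i = j" using mono_seq[OF t1(1), of i j] mono_seq[OF t1(1), of j i]
      by (cases i j rule: linorder_cases) auto
  qed
  show "\<forall>i\<le>m. -1 \<le> t i \<and> t i \<le> 1"
    using mono_seq_le[OF t1(1)] t1(3,4) by (metis le0 order_refl)
  show "\<forall>z::complex. poly (PP m) z = 0 \<longrightarrow> (\<exists>i\<le>m. z = of_real (t i))"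
  proof (intro allI impI)
    fix z :: complex assume z: "poly (PP m) z = 0"
    let ?A = "(\<lambda>i. complex_of_real (t i)) ` {..m}"
    have dgc: "degree (PP m :: complex poly) = m + 1" using dg degree_PP_complex by simp
    then have nz: "(PP m :: complex poly) \<noteq> 0" by auto
    have "inj_on (\<lambda>i. complex_of_real (t i)) {..m}"
      using injt by (auto simp: inj_on_def)
    then have "card ?A = m + 1" by (simp add: card_image)
    moreover have "?A \<subseteq> {x. poly (PP m) x = 0}"
      using t1(2) by (auto simp: poly_PP_of_real)
    ultimately have "z \<in> ?A" using roots_subset[OF nz _ _ _ z] dgc by simp
    then show "\<exists>i\<le>m. z = of_real (t i)" by auto
  qed
  show "\<forall>i\<le>m. poly (pderiv (PP m :: real poly)) (t i) \<noteq> 0"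
  proof (intro allI impI notI)
    fix k assume k: "k \<le> m" and z: "poly (pderiv (PP m :: real poly)) (t k) = 0"
    obtain s where s: "\<forall>i<m. t i < s i \<and> s i < t (Suc i) \<and> poly (pderiv (PP m)) (s i) = 0"
      using rolle_many[OF t1(1,2)] by blast
    have dgp: "degree (pderiv (PP m :: real poly)) = m" using dg by (simp add: degree_pderiv)
    then have nz: "pderiv (PP m :: real poly) \<noteq> 0" using m by auto
    have injs: "inj_on s {..<m}"
    proof (rule inj_onI)
      fix i j assume ij: "i \<in> {..<m}" "j \<in> {..<m}" "s i = s j"
      have "s i < s j" if "i < j" "j < m" for i j
      proof -
        have "s i < t (Suc i)" using s that by auto
        also have "t (Suc i) \<le> t j" using mono_seq_le[OF t1(1), of "Suc i" j] that by auto
        also have "t j < s j" using s that by auto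
        finally show ?thesis .
      qed
      then show "i = j" using ij by (cases i j rule: linorder_cases) (auto, metis less_irrefl, metis less_irrefl)
    qed
    let ?A = "s ` {..<m}"
    have "card ?A = m" using injs by (simp add: card_image)
    moreover have "?A \<subseteq> {x. poly (pderiv (PP m)) x = 0}" using s by auto
    ultimately have "t k \<in> ?A" using roots_subset[OF nz _ _ _ z] dgp by simp
    then obtain i where i: "i < m" "t k = s i" by auto
    have "t i < t k" "t k < t (Suc i)" using s i by auto
    moreover have "k \<le> i \<Longrightarrow> t k \<le> t i" using mono_seq_le[OF t1(1), of k i] i(1) by auto
    moreover have "Suc i \<le> k \<Longrightarrow> t (Suc i) \<le> t k" using mono_seq_le[OF t1(1), of "Suc i" k] k by auto
    ultimately show False by linarith
  qed
qed

definition Cf :: "complex \<Rightarrow> complex \<Rightarrow> complex \<Rightarrow> complex" where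
  "Cf a b z = (a * exp z + b) / (a * exp z - b)"

lemma Cf_deriv:
  assumes "a * exp z \<noteq> b"
  shows "(Cf a b has_field_derivative (1 - (Cf a b z)^2)/2) (at z)"
proof -
  have ne: "a * exp z - b \<noteq> 0" using assms by simp
  have D: "(Cf a b has_field_derivative
      ((a * exp z) * (a * exp z - b) - (a * exp z + b) * (a * exp z)) / (a * exp z - b)^2) (at z)"
    unfolding Cf_def
    by (rule derivative_eq_intros refl | use ne in \<open>simp add: power2_eq_square\<close>)+
  have W: "(w * (w - b) - (w + b) * w) / (w - b)^2 = (1 - ((w + b) / (w - b))^2)/2"
    if "w - b \<noteq> 0" for w :: complex
  proof -
    have "(1 - ((w + b) / (w - b))^2) = ((w-b)^2 - (w+b)^2) / (w-b)^2"
      using that by (simp add: field_simps)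
    also have "(w-b)^2 - (w+b)^2 = 2 * (w * (w - b) - (w + b) * w)" by (simp add: algebra_simps power2_eq_square)
    finally show ?thesis using that by (simp add: field_simps)
  qed
  have "((a * exp z) * (a * exp z - b) - (a * exp z + b) * (a * exp z)) / (a * exp z - b)^2
      = (1 - (Cf a b z)^2)/2" unfolding Cf_def by (rule W) (rule ne)
  with D show ?thesis by simp
qed

lemma f_split:
  fixes x T z :: complex
  assumes x: "x \<noteq> 0" and T: "T^2 = 1 - 2/x"
    and z1: "(T+1) * exp z \<noteq> T - 1" and z2: "(T-1) * exp z \<noteq> T + 1"
  shows "sinh z / (cosh z - 1 + x) = (Cf (T+1) (T-1) z + Cf (T-1) (T+1) z) / 2"
proof -
  define E where "E = exp z"
  have E: "E \<noteq> 0" by (simp add: E_def)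
  have T1: "T^2 - 1 \<noteq> 0" using T x by simp
  have xe: "x = 2 / (1 - T^2)" using T x T1 by (simp add: field_simps)
  have d1: "(T+1) * E - (T-1) \<noteq> 0" using z1 by (simp add: E_def)
  have d2: "(T-1) * E - (T+1) \<noteq> 0" using z2 by (simp add: E_def)
  have sh: "sinh z = (E - inverse E)/2" by (simp add: sinh_def E_def exp_minus scaleR_conv_of_real field_simps)
  have ch: "cosh z = (E + inverse E)/2" by (simp add: cosh_def E_def exp_minus scaleR_conv_of_real field_simps)
  have prod: "((T+1) * E - (T-1)) * ((T-1) * E - (T+1)) = (T^2 - 1) * (2 * E) * (cosh z - 1 + x)"
    using T1 E unfolding ch xe by (simp add: field_simps power2_eq_square)
  have dn: "cosh z - 1 + x \<noteq> 0" using prod d1 d2 by auto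
  define N1 where "N1 = (T+1) * E + (T-1)"
  define N2 where "N2 = (T-1) * E + (T+1)"
  define D1 where "D1 = (T+1) * E - (T-1)"
  define D2 where "D2 = (T-1) * E - (T+1)"
  have num: "N1 * D2 + N2 * D1 = (T^2 - 1) * (2 * E) * (E - inverse E)"
    unfolding N1_def N2_def D1_def D2_def using E by (simp add: field_simps power2_eq_square)
  have "(Cf (T+1) (T-1) z + Cf (T-1) (T+1) z) / 2 = (N1 / D1 + N2 / D2) / 2"
    unfolding Cf_def N1_def N2_def D1_def D2_def E_def by simp
  also have "\<dots> = (N1 * D2 + N2 * D1) / (D1 * D2) / 2"
    using d1 d2 unfolding D1_def D2_def by (simp add: add_frac_eq)
  also have "\<dots> = ((T^2 - 1) * (2 * E) * (E - inverse E)) / ((T^2 - 1) * (2 * E) * (cosh z - 1 + x)) / 2"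
    using prod num unfolding D1_def D2_def by simp
  also have "\<dots> = (E - inverse E) / (cosh z - 1 + x) / 2"
    using T1 E by simp
  also have "\<dots> = sinh z / (cosh z - 1 + x)" unfolding sh by simp
  finally show ?thesis ..
qed

lemma higher_f:
  fixes x T :: complex
  assumes x: "x \<noteq> 0" and T: "T^2 = 1 - 2/x"
  shows "(deriv^^m) (\<lambda>z. sinh z / (cosh z - 1 + x)) 0
         = (1/2)^(Suc m) * (poly (PP m) T + poly (PP m) (-T))"
proof -
  define f where "f = (\<lambda>z. sinh z / (cosh z - 1 + x))"
  define C1 where "C1 = Cf (T+1) (T-1)"
  define C2 where "C2 = Cf (T-1) (T+1)"
  define S where "S = {z. (T+1) * exp z \<noteq> T - 1} \<inter> {z. (T-1) * exp z \<noteq> T + 1}"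
  have oS: "open S" unfolding S_def
    by (intro open_Int open_Collect_neq continuous_intros)
  have 0: "0 \<in> S" unfolding S_def by simp
  have IH: "\<forall>z\<in>S. (deriv^^m) f z = (1/2)^(Suc m) * (poly (PP m) (C1 z) + poly (PP m) (C2 z))"
  proof (induction m)
    case 0
    show ?case unfolding f_def C1_def C2_def S_def
      using f_split[OF x T] by simp
  next
    case (Suc m)
    show ?case
    proof
      fix z assume z: "z \<in> S"
      have dC1: "(C1 has_field_derivative (1 - (C1 z)^2)/2) (at z)"
        unfolding C1_def by (rule Cf_deriv) (use z in \<open>auto simp: S_def\<close>)
      have dC2: "(C2 has_field_derivative (1 - (C2 z)^2)/2) (at z)"
        unfolding C2_def by (rule Cf_deriv) (use z in \<open>auto simp: S_def\<close>)
      have p1: "((\<lambda>y. poly (PP m) (C1 y)) has_field_derivative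
                 poly (pderiv (PP m)) (C1 z) * ((1 - (C1 z)^2)/2)) (at z)"
        by (rule DERIV_chain2[OF poly_DERIV dC1])
      have p2: "((\<lambda>y. poly (PP m) (C2 y)) has_field_derivative
                 poly (pderiv (PP m)) (C2 z) * ((1 - (C2 z)^2)/2)) (at z)"
        by (rule DERIV_chain2[OF poly_DERIV dC2])
      have G: "((\<lambda>y. (1/2)^(Suc m) * (poly (PP m) (C1 y) + poly (PP m) (C2 y))) has_field_derivative
                 (1/2)^(Suc m) * (poly (pderiv (PP m)) (C1 z) * ((1 - (C1 z)^2)/2)
                    + poly (pderiv (PP m)) (C2 z) * ((1 - (C2 z)^2)/2))) (at z)"
        by (intro DERIV_cmult DERIV_add p1 p2)
      have eqv: "(1/2)^(Suc m) * (poly (pderiv (PP m)) (C1 z) * ((1 - (C1 z)^2)/2)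
                    + poly (pderiv (PP m)) (C2 z) * ((1 - (C2 z)^2)/2))
               = (1/2)^(Suc (Suc m)) * (poly (PP (Suc m)) (C1 z) + poly (PP (Suc m)) (C2 z))"
        by (simp only: poly_PP_Suc) (simp add: field_simps)
      have "((deriv^^m) f has_field_derivative
               (1/2)^(Suc (Suc m)) * (poly (PP (Suc m)) (C1 z) + poly (PP (Suc m)) (C2 z))) (at z)"
      proof -
        have "((deriv^^m) f has_field_derivative
               (1/2)^(Suc m) * (poly (pderiv (PP m)) (C1 z) * ((1 - (C1 z)^2)/2)
                    + poly (pderiv (PP m)) (C2 z) * ((1 - (C2 z)^2)/2))) (at z)"
          by (rule has_field_derivative_transform_within_open[OF G oS z]) (use Suc.IH in auto)
        then show ?thesis unfolding eqv .
      qed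
      then show "(deriv^^Suc m) f z = (1/2)^(Suc (Suc m)) * (poly (PP (Suc m)) (C1 z) + poly (PP (Suc m)) (C2 z))"
        by (simp add: DERIV_imp_deriv)
    qed
  qed
  have "C1 0 = T" unfolding C1_def Cf_def by simp
  moreover have "C2 0 = -T" unfolding C2_def Cf_def by (simp add: field_simps)
  ultimately show ?thesis using IH 0 unfolding f_def by simp
qed

lemma alpha_eq:
  assumes x: "x \<noteq> 0" and T: "T^2 = 1 - 2/x"
  shows "alpha n x = (1/2)^(2*n+1) / fact (2*n+1) * poly (PP (2*n+1)) T"
proof -
  have m: "poly (PP (2*n+1)) (-T) = poly (PP (2*n+1)) T"
    by (simp only: poly_PP_minus) (simp del: PP.simps)
  have h: "\<And>(p::complex) k. (1/2)^(Suc k) * (p + p) / fact k = (1/2)^k / fact k * p"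
    by (simp add: field_simps)
  show ?thesis unfolding alpha_def higher_f[OF x T] m by (rule h)
qed

theorem propositionA1:
  fixes n :: nat and x :: complex
  assumes "x \<noteq> 0" and "alpha n x = 0"
  shows "x \<in> \<real> \<and> Re x > 2 \<and> deriv (alpha n) x \<noteq> 0"
proof -
  define m where "m = 2*n+1"
  have m1: "m \<ge> 1" and om: "odd m" by (auto simp: m_def)
  obtain t where ok: "roots_ok (PP m) m t" and dg: "degree (PP m :: real poly) = m + 1"
    using PP_roots[OF m1] by blast
  note F = PP_root_facts[OF m1 ok dg]
  from ok have troot: "\<forall>i\<le>m. poly (PP m) (t i) = 0" by (auto simp: roots_ok_def)
  define c :: complex where "c = (1/2)^m / fact m"
  have c0: "c \<noteq> 0" by (simp add: c_def)
  define w where "w = 1 - 2/x"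
  have aeq: "alpha n y = c * poly (PP m) (csqrt (1 - 2/y))" if "y \<noteq> 0" for y
    using alpha_eq[OF that, of "csqrt (1 - 2/y)" n] by (simp add: c_def m_def)
  have "poly (PP m) (csqrt w) = 0" using aeq[OF assms(1)] assms(2) c0 by (simp add: w_def)
  then obtain i where i: "i \<le> m" "csqrt w = of_real (t i)" using F(1) by blast
  define r where "r = t i"
  have rroot: "poly (PP m) r = 0" using troot i by (simp add: r_def)
  have r0: "r \<noteq> 0"
  proof
    assume "r = 0"
    then show False using F(2) i(1) pderiv_PP_odd_0[OF om] by (auto simp: r_def)
  qed
  have wr: "w = of_real (r^2)" using i(2) by (metis power2_csqrt r_def of_real_power)
  have r1: "r^2 \<noteq> 1"
  proof
    assume "r^2 = 1"
    then have "2/x = 0" using wr by (simp add: w_def)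
    then show False using assms(1) by simp
  qed
  have rb: "-1 \<le> r" "r \<le> 1" using F(3) i(1) by (auto simp: r_def)
  have r2: "0 < r^2" "r^2 < 1"
  proof -
    have "r^2 \<le> 1" using rb by (simp add: abs_square_le_1)
    then show "0 < r^2" "r^2 < 1" using r0 r1 by auto
  qed
  have xeq: "x = of_real (2 / (1 - r^2))"
  proof -
    have "2/x = of_real (1 - r^2)" using wr by (simp add: w_def algebra_simps)
    moreover have nz: "complex_of_real (1 - r^2) \<noteq> 0" using r1 by (subst of_real_eq_0_iff) simp
    ultimately have "x * of_real (1 - r^2) = 2" using assms(1) by (simp add: field_simps)
    then have "x = 2 / of_real (1 - r^2)" using nz by (simp add: field_simps)
    then show ?thesis by simp
  qed
  have xre: "x \<in> \<real>" unfolding xeq by simp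
  have xgt: "Re x > 2" unfolding xeq using r2 by (simp add: field_simps)
  have sw: "csqrt w = of_real \<bar>r\<bar>" using wr by (simp add: csqrt_of_real)
  have wn: "w \<notin> \<real>\<^sub>\<le>\<^sub>0" using wr r2 by (simp add: complex_nonpos_Reals_iff)
  have absroot: "poly (PP m :: complex poly) (of_real \<bar>r\<bar>) = 0"
  proof -
    have "poly (PP m) \<bar>r\<bar> = poly (PP m) r"
      using om by (cases "r \<ge> 0") (auto simp: poly_PP_minus)
    then show ?thesis using rroot by (simp add: poly_PP_of_real)
  qed
  then obtain j where j: "j \<le> m" "complex_of_real \<bar>r\<bar> = of_real (t j)" using F(1) by blast
  have pd: "poly (pderiv (PP m)) (csqrt w) \<noteq> 0"
    using F(2) j unfolding sw by (simp add: pderiv_PP_of_real)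
  have d1: "((\<lambda>y. 1 - 2/y) has_field_derivative 2 / x^2) (at x)"
    using assms(1) by (auto intro!: derivative_eq_intros simp: power2_eq_square field_simps)
  have d2: "((\<lambda>y. csqrt (1 - 2/y)) has_field_derivative inverse (2 * csqrt w) * (2 / x^2)) (at x)"
    using DERIV_chain2[OF has_field_derivative_csqrt d1] wn by (simp add: w_def)
  have d3: "((\<lambda>y. c * poly (PP m) (csqrt (1 - 2/y))) has_field_derivative
       c * (poly (pderiv (PP m)) (csqrt w) * (inverse (2 * csqrt w) * (2 / x^2)))) (at x)"
    using DERIV_cmult[OF DERIV_chain2[OF poly_DERIV d2]] by (simp add: w_def)
  have "(alpha n has_field_derivative
       c * (poly (pderiv (PP m)) (csqrt w) * (inverse (2 * csqrt w) * (2 / x^2)))) (at x)"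
    by (rule has_field_derivative_transform_within_open[OF d3, of "-{0}"])
       (use assms(1) aeq in auto)
  then have "deriv (alpha n) x = c * (poly (pderiv (PP m)) (csqrt w) * (inverse (2 * csqrt w) * (2 / x^2)))"
    by (rule DERIV_imp_deriv)
  moreover have "csqrt w \<noteq> 0" using sw r0 by simp
  ultimately have "deriv (alpha n) x \<noteq> 0" using c0 pd assms(1) by simp
  with xre xgt show ?thesis by blast
qed

end
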